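(* The maps $\Psi,\Phi:\mathfrak{S}_n\to\mathfrak{S}_n$ are inverses of each other. Moreover, for every $\pi\in\mathfrak{S}_n$, $$\operatorname{Odd}(\pi)=\operatorname{Redge}(\Psi(\pi))\quad\text{and}\quad \operatorname{Redge}(\pi)=\operatorname{Odd}(\Phi(\pi)).$$
   Context: For $\pi\in\mathfrak{S}_n$ (a word $a_1\cdots a_n$) and $x\in[n]$, the $x$-factorization is $\pi=w_1w_2xw_4w_5$ where $w_2$ (resp. $w_4$) is the maximal contiguous subword immediately to the left (resp. right) of $x$ all of whose letters are smaller than $x$; set $\varphi_x(\pi)=w_1w_4xw_2w_5$. These $\varphi_x$ are commuting involutions. The decreasing binary tree of a word $w$ with distinct positive integer letters: empty if $w$ is empty; otherwise write $w=LmR$ with $m$ the greatest letter, the root is labeled $m$, its left subtree is the tree of $L$ and its right subtree the tree of $R$. For $x\in[n]$, $r_\pi(x)$ is the number of right edges on the path from the root to $x$ in the decreasing binary tree of $\pi$. $\operatorname{Odd}(\pi)=\{x\in[n]:r_\pi(x)\text{ odd}\}$, and $\operatorname{Redge}(\pi)$ is the set of vertices that are the lower ends of right edges in that tree. Define $\Psi(\pi)=\prod_{x\in\operatorname{Odd}(\pi)}\varphi_x(\pi)$ and $\Phi(\pi)=\prod_{x\in\operatorname{Redge}(\pi)}\varphi_x(\pi)$. *)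

theory Defs
  imports "HOL-Library.Tree"
begin

definition is_perm :: "nat \<Rightarrow> nat list \<Rightarrow> bool" where
  "is_perm n w \<longleftrightarrow> distinct w \<and> set w = {1..n}"

definition phi :: "nat \<Rightarrow> nat list \<Rightarrow> nat list" where
  "phi x w =
     (if x \<notin> set w then w else
      (let L = takeWhile (\<lambda>a. a \<noteq> x) w;
           R = tl (dropWhile (\<lambda>a. a \<noteq> x) w);
           w2 = rev (takeWhile (\<lambda>a. a < x) (rev L));
           w1 = take (length L - length w2) L;
           w4 = takeWhile (\<lambda>a. a < x) R;
           w5 = dropWhile (\<lambda>a. a < x) R
       in w1 @ w4 @ [x] @ w2 @ w5))"

(* product of the phi_x over a finite set of letters; composed in increasing
   order of x (the phi_x commute, so the order is immaterial) *)
definition phi_prod :: "nat set \<Rightarrow> nat list \<Rightarrow> nat list" where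
  "phi_prod S w = fold phi (sorted_list_of_set S) w"

lemma length_takeWhile_neq_less:
  "m \<in> set w \<Longrightarrow> length (takeWhile (\<lambda>a. a \<noteq> m) w) < length w"
  by (induction w) auto

lemma length_tl_dropWhile_less:
  "w \<noteq> [] \<Longrightarrow> length (tl (dropWhile P w)) < length w"
  using length_dropWhile_le[of P w] by (cases w) auto

function dtree :: "nat list \<Rightarrow> nat tree" where
  "dtree w = (if w = [] then Leaf else
     Node (dtree (takeWhile (\<lambda>a. a \<noteq> Max (set w)) w))
          (Max (set w))
          (dtree (tl (dropWhile (\<lambda>a. a \<noteq> Max (set w)) w))))"
  by pat_completeness auto
termination
  by (relation "measure length")
     (auto intro: length_takeWhile_neq_less length_tl_dropWhile_less simp del: length_tl)

fun rcount :: "nat tree \<Rightarrow> nat \<Rightarrow> nat" where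
  "rcount Leaf x = 0"
| "rcount (Node l a r) x =
     (if x = a then 0 else if x \<in> set_tree l then rcount l x else Suc (rcount r x))"

fun redges :: "nat tree \<Rightarrow> nat set" where
  "redges Leaf = {}"
| "redges (Node l a r) = redges l \<union> redges r \<union>
     (case r of Leaf \<Rightarrow> {} | Node _ b _ \<Rightarrow> {b})"

definition r_pi :: "nat list \<Rightarrow> nat \<Rightarrow> nat" where
  "r_pi w x = rcount (dtree w) x"

definition Odd_set :: "nat \<Rightarrow> nat list \<Rightarrow> nat set" where
  "Odd_set n w = {x \<in> {1..n}. odd (r_pi w x)}"

definition Redge :: "nat list \<Rightarrow> nat set" where
  "Redge w = redges (dtree w)"

definition Psi :: "nat \<Rightarrow> nat list \<Rightarrow> nat list" where
  "Psi n w = phi_prod (Odd_set n w) w"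

definition Phi :: "nat list \<Rightarrow> nat list" where
  "Phi w = phi_prod (Redge w) w"

end

theory Submission
  imports Defs
begin

declare dtree.simps[simp del]

fun dheap :: "nat tree \<Rightarrow> bool" where
  "dheap Leaf = True"
| "dheap (Node l a r) = (dheap l \<and> dheap r \<and> (\<forall>x\<in>set_tree l. x < a) \<and> (\<forall>x\<in>set_tree r. x < a))"

fun swp :: "nat set \<Rightarrow> nat tree \<Rightarrow> nat tree" where
  "swp S Leaf = Leaf"
| "swp S (Node l a r) = (if a \<in> S then Node (swp S r) a (swp S l) else Node (swp S l) a (swp S r))"

lemma set_tree_swp[simp]: "set_tree (swp S t) = set_tree t"
  by (induction t) auto

lemma distinct_swp: "distinct (inorder t) \<Longrightarrow> distinct (inorder (swp S t))"
  by (induction t) auto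

lemma dheap_swp: "dheap t \<Longrightarrow> dheap (swp S t)"
  by (induction t) auto

lemma swp_cong: "(\<forall>x\<in>set_tree t. x \<in> S \<longleftrightarrow> x \<in> S') \<Longrightarrow> swp S t = swp S' t"
  by (induction t) auto

lemma swp_id: "(\<forall>x\<in>set_tree t. x \<notin> S) \<Longrightarrow> swp S t = t"
  by (induction t) auto

lemma swp_invol[simp]: "swp S (swp S t) = t"
  by (induction t) auto

lemma swp_insert: "x \<notin> A \<Longrightarrow> swp A (swp {x} t) = swp (insert x A) t"
  by (induction t) auto

lemma dtree_Nil: "dtree [] = Leaf"
  by (simp add: dtree.simps)

lemma dtree_nonNil: "w \<noteq> [] \<Longrightarrow> dtree w = Node (dtree (takeWhile (\<lambda>a. a \<noteq> Max (set w)) w))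
          (Max (set w))
          (dtree (tl (dropWhile (\<lambda>a. a \<noteq> Max (set w)) w)))"
  by (simp add: dtree.simps)

lemma dtree_props: "distinct w \<Longrightarrow> inorder (dtree w) = w \<and> dheap (dtree w)"
proof (induction w rule: dtree.induct)
  case (1 w)
  show ?case
  proof (cases "w = []")
    case True then show ?thesis by (simp add: dtree_Nil)
  next
    case False
    define m where "m = Max (set w)"
    have mw: "m \<in> set w" using False by (simp add: m_def)
    define L where "L = takeWhile (\<lambda>a. a \<noteq> m) w"
    define R where "R = tl (dropWhile (\<lambda>a. a \<noteq> m) w)"
    have dw: "dropWhile (\<lambda>a. a \<noteq> m) w = m # R"
      using mw unfolding R_def
      by (metis (mono_tags, lifting) dropWhile_eq_Nil_conv hd_dropWhile list.collapse)
    have wLR: "w = L @ m # R"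
      using takeWhile_dropWhile_id[of "\<lambda>a. a \<noteq> m" w] dw L_def by simp
    have dd: "distinct (L @ m # R)" using "1.prems" wLR by simp
    then have dL: "distinct L" and dR: "distinct R" and mL: "m \<notin> set L" and mR: "m \<notin> set R" by auto
    have sw: "set w = set L \<union> {m} \<union> set R" using wLR by auto
    have IH1: "inorder (dtree L) = L \<and> dheap (dtree L)"
      using "1.IH"(1)[OF False] dL by (simp add: L_def m_def)
    have IH2: "inorder (dtree R) = R \<and> dheap (dtree R)"
      using "1.IH"(2)[OF False] dR by (simp add: R_def m_def)
    have fin: "finite (set w)" by simp
    have le: "\<And>x. x \<in> set w \<Longrightarrow> x \<le> m" using fin by (simp add: m_def)
    have ltL: "\<forall>x\<in>set L. x < m"
    proof
      fix x assume "x \<in> set L"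
      then have "x \<le> m" "x \<noteq> m" using le sw mL by auto
      then show "x < m" by simp
    qed
    have ltR: "\<forall>x\<in>set R. x < m"
    proof
      fix x assume "x \<in> set R"
      then have "x \<le> m" "x \<noteq> m" using le sw mR by auto
      then show "x < m" by simp
    qed
    have "dtree w = Node (dtree L) m (dtree R)"
      using dtree_nonNil[OF False] by (simp add: L_def R_def m_def)
    moreover have "set_tree (dtree L) = set L" using IH1 by (metis set_inorder)
    moreover have "set_tree (dtree R) = set R" using IH2 by (metis set_inorder)
    ultimately show ?thesis using IH1 IH2 ltL ltR by (simp add: wLR[symmetric])
  qed
qed

lemma tw_notin: "a \<notin> set xs \<Longrightarrow> takeWhile (\<lambda>z. z \<noteq> a) (xs @ a # ys) = xs"
  by (induction xs) auto

lemma dw_notin: "a \<notin> set xs \<Longrightarrow> dropWhile (\<lambda>z. z \<noteq> a) (xs @ a # ys) = a # ys"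
  by (induction xs) auto

lemma tw_app: "\<not> P a \<Longrightarrow> takeWhile P (xs @ a # ys) = takeWhile P xs"
  by (induction xs) auto

lemma dw_app: "\<not> P a \<Longrightarrow> dropWhile P (xs @ a # ys) = dropWhile P xs @ a # ys"
  by (induction xs) auto

lemma dtree_inorder: "dheap t \<Longrightarrow> distinct (inorder t) \<Longrightarrow> dtree (inorder t) = t"
proof (induction t)
  case Leaf then show ?case by (simp add: dtree_Nil)
next
  case (Node l a r)
  have ne: "inorder (Node l a r) \<noteq> []" by simp
  have mx: "Max (set (inorder (Node l a r))) = a"
    using Node.prems by (intro Max_eqI) (auto intro: less_imp_le)
  have an: "a \<notin> set (inorder l)" using Node.prems by simp
  have tw: "takeWhile (\<lambda>x. x \<noteq> a) (inorder l @ a # inorder r) = inorder l"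
    using an by (rule tw_notin)
  have dw: "dropWhile (\<lambda>x. x \<noteq> a) (inorder l @ a # inorder r) = a # inorder r"
    using an by (rule dw_notin)
  show ?case using Node dtree_nonNil[OF ne] mx tw dw by simp
qed

lemma phi_notin: "x \<notin> set w \<Longrightarrow> phi x w = w"
  by (simp add: phi_def)

lemma phi_root:
  assumes "a \<notin> set xs" "\<forall>z\<in>set xs. z < a" "\<forall>z\<in>set ys. z < a"
  shows "phi a (xs @ a # ys) = ys @ a # xs"
proof -
  have t: "takeWhile (\<lambda>z. z \<noteq> a) (xs @ a # ys) = xs"
    using assms(1) by (induction xs) auto
  have d: "dropWhile (\<lambda>z. z \<noteq> a) (xs @ a # ys) = a # ys"
    using assms(1) by (induction xs) auto
  have r: "takeWhile (\<lambda>z. z < a) (rev xs) = rev xs" using assms by simp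
  have r2: "takeWhile (\<lambda>z. z < a) ys = ys" using assms by simp
  have r3: "dropWhile (\<lambda>z. z < a) ys = []" using assms by simp
  have "phi a (xs @ a # ys) = take (length xs - length xs) xs @ ys @ [a] @ rev (rev xs) @ []"
    unfolding phi_def Let_def t d by (simp only: r r2 r3 length_rev list.sel if_True set_append) simp
  then show ?thesis by simp
qed

lemma phi_left:
  assumes "x \<in> set xs" "x \<le> a"
  shows "phi x (xs @ a # ys) = phi x xs @ a # ys"
proof -
  have t: "takeWhile (\<lambda>z. z \<noteq> x) (xs @ a # ys) = takeWhile (\<lambda>z. z \<noteq> x) xs"
    using assms by simp
  have ne: "dropWhile (\<lambda>z. z \<noteq> x) xs \<noteq> []" using assms(1) by simp
  have d: "tl (dropWhile (\<lambda>z. z \<noteq> x) (xs @ a # ys)) = tl (dropWhile (\<lambda>z. z \<noteq> x) xs) @ a # ys"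
    using assms ne by simp
  have t2: "takeWhile (\<lambda>z. z < x) (R @ a # ys) = takeWhile (\<lambda>z. z < x) R" for R
    using assms(2) tw_app[of "\<lambda>z. z < x" a R ys] by simp
  have d2: "dropWhile (\<lambda>z. z < x) (R @ a # ys) = dropWhile (\<lambda>z. z < x) R @ a # ys" for R
    using assms(2) dw_app[of "\<lambda>z. z < x" a R ys] by simp
  show ?thesis unfolding phi_def Let_def using t d t2 d2 assms by simp
qed

lemma phi_right:
  assumes "x \<in> set ys" "x \<notin> set xs" "x < a"
  shows "phi x (xs @ a # ys) = xs @ a # phi x ys"
proof -
  define L where "L = takeWhile (\<lambda>z. z \<noteq> x) ys"
  have t: "takeWhile (\<lambda>z. z \<noteq> x) (xs @ a # ys) = xs @ a # L"
    using assms(2,3) by (induction xs) (auto simp: L_def)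
  have d: "dropWhile (\<lambda>z. z \<noteq> x) (xs @ a # ys) = dropWhile (\<lambda>z. z \<noteq> x) ys"
    using assms(2,3) by (induction xs) auto
  define W where "W = takeWhile (\<lambda>z. z < x) (rev L)"
  have t2: "takeWhile (\<lambda>z. z < x) (rev (xs @ a # L)) = W"
    using assms(3) tw_app[of "\<lambda>z. z < x" a "rev L" "rev xs"] by (simp add: W_def)
  have lw: "length W \<le> length L" unfolding W_def
    by (metis length_rev length_takeWhile_le)
  have tk: "take (length (xs @ a # L) - length W) (xs @ a # L) = xs @ a # take (length L - length W) L"
    using lw by (simp add: take_append Suc_diff_le)
  show ?thesis unfolding phi_def Let_def using t d t2 tk assms
    by (simp add: L_def W_def)
qed

lemma phi_tree: "dheap t \<Longrightarrow> distinct (inorder t) \<Longrightarrow> phi x (inorder t) = inorder (swp {x} t)"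
proof (induction t)
  case Leaf then show ?case by (simp add: phi_notin)
next
  case (Node l a r)
  have lt1: "\<forall>z\<in>set (inorder l). z < a" and lt2: "\<forall>z\<in>set (inorder r). z < a" using Node.prems by auto
  have an: "a \<notin> set (inorder l)" using Node.prems by auto
  show ?case
  proof (cases "x = a")
    case True
    have "swp {a} r = r" "swp {a} l = l" using lt1 lt2 by (auto intro!: swp_id)
    then show ?thesis using phi_root[OF an lt1 lt2] True by simp
  next
    case False
    show ?thesis
    proof (cases "x \<in> set_tree l")
      case True
      have "x \<notin> set_tree r" using Node.prems True by auto
      then have "swp {x} r = r" by (intro swp_id) auto
      moreover have "x \<le> a" using lt1 True by auto
      ultimately show ?thesis using phi_left[of x "inorder l" a "inorder r"] True False Node by simp
    next
      case xl: False
      show ?thesis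
      proof (cases "x \<in> set_tree r")
        case True
        have "swp {x} l = l" using xl by (intro swp_id) auto
        moreover have "x < a" using lt2 True by auto
        ultimately have e: "swp {x} (Node l a r) = Node l a (swp {x} r)"
          and ph: "phi x (inorder l @ a # inorder r) = inorder l @ a # phi x (inorder r)"
          using phi_right[of x "inorder r" "inorder l" a] True xl \<open>x \<noteq> a\<close> by auto
        show ?thesis unfolding e using ph Node by simp
      next
        case False
        then have "swp {x} (Node l a r) = Node l a r" using xl \<open>x \<noteq> a\<close> by (intro swp_id) auto
        moreover have "phi x (inorder (Node l a r)) = inorder (Node l a r)"
          using xl False \<open>x \<noteq> a\<close> by (intro phi_notin) auto
        ultimately show ?thesis by simp
      qed
    qed
  qed
qed

lemma fold_phi_tree: "distinct xs \<Longrightarrow> dheap t \<Longrightarrow> distinct (inorder t) \<Longrightarrow>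
   fold phi xs (inorder t) = inorder (swp (set xs) t)"
proof (induction xs arbitrary: t)
  case Nil then show ?case by (simp add: swp_id)
next
  case (Cons x xs)
  have "fold phi (x # xs) (inorder t) = fold phi xs (inorder (swp {x} t))"
    using phi_tree[OF Cons.prems(2,3)] by simp
  also have "\<dots> = inorder (swp (set xs) (swp {x} t))"
    using Cons dheap_swp distinct_swp by simp
  also have "\<dots> = inorder (swp (set (x # xs)) t)"
    using Cons.prems(1) swp_insert[of x "set xs" t] by simp
  finally show ?case .
qed

lemma phi_prod_tree: "finite S \<Longrightarrow> dheap t \<Longrightarrow> distinct (inorder t) \<Longrightarrow>
   phi_prod S (inorder t) = inorder (swp S t)"
  unfolding phi_prod_def using fold_phi_tree[of "sorted_list_of_set S" t] by simp

definition Pset :: "nat \<Rightarrow> nat tree \<Rightarrow> nat set" where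
  "Pset b t = {x \<in> set_tree t. odd (rcount t x + b)}"

fun rootset :: "nat tree \<Rightarrow> nat set" where
  "rootset Leaf = {}"
| "rootset (Node l a r) = {a}"

lemma rootset_sub: "rootset t \<subseteq> set_tree t"
  by (cases t) auto

lemma redges_alt: "redges (Node l a r) = redges l \<union> redges r \<union> rootset r"
  by (cases r) auto

declare redges.simps(2)[simp del]

lemma redges_sub: "redges t \<subseteq> set_tree t"
  by (induction t) (auto simp: redges_alt dest: rootset_sub[THEN subsetD])

lemma rootset_swp[simp]: "rootset (swp S t) = rootset t"
  by (cases t) auto

lemma Pset_sub: "Pset b t \<subseteq> set_tree t"
  by (auto simp: Pset_def)

lemma Pset_Node: "distinct (inorder (Node l a r)) \<Longrightarrow>
  Pset b (Node l a r) = (if odd b then {a} else {}) \<union> Pset b l \<union> Pset (Suc b) r"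
  by (auto simp: Pset_def)

lemma keyA: "distinct (inorder t) \<Longrightarrow>
  redges (swp (Pset b t) t) \<union> (if odd b then rootset t else {}) = Pset b t"
proof (induction t arbitrary: b)
  case Leaf then show ?case by (simp add: Pset_def)
next
  case (Node l a r)
  define S where "S = Pset b (Node l a r)"
  have S: "S = (if odd b then {a} else {}) \<union> Pset b l \<union> Pset (Suc b) r"
    using Pset_Node[OF Node.prems] S_def by simp
  have dl: "distinct (inorder l)" and dr: "distinct (inorder r)" using Node.prems by auto
  have sl: "Pset b l \<subseteq> set_tree l" and sr: "Pset (Suc b) r \<subseteq> set_tree r" by (rule Pset_sub)+
  have Sl: "swp S l = swp (Pset b l) l"
    by (rule swp_cong) (use Node.prems sr S in auto)
  have Sr: "swp S r = swp (Pset (Suc b) r) r"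
    by (rule swp_cong) (use Node.prems sl S in auto)
  have aS: "a \<in> S \<longleftrightarrow> odd b" using Node.prems sl sr S by auto
  have IHl: "redges (swp (Pset b l) l) \<union> (if odd b then rootset l else {}) = Pset b l"
    using Node.IH(1)[OF dl] .
  have IHr: "redges (swp (Pset (Suc b) r) r) \<union> (if odd (Suc b) then rootset r else {}) = Pset (Suc b) r"
    using Node.IH(2)[OF dr] .
  show ?case
  proof (cases "odd b")
    case True
    then have "swp S (Node l a r) = Node (swp S r) a (swp S l)" using aS by simp
    then show ?thesis using IHl IHr True S Sl Sr unfolding S_def[symmetric] by (auto simp: redges_alt)
  next
    case False
    then have "swp S (Node l a r) = Node (swp S l) a (swp S r)" using aS by simp
    then show ?thesis using IHl IHr False S Sl Sr unfolding S_def[symmetric] by (auto simp: redges_alt)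
  qed
qed

definition Rb :: "nat \<Rightarrow> nat tree \<Rightarrow> nat set" where
  "Rb b t = redges t \<union> (if odd b then rootset t else {})"

lemma Rb_sub: "Rb b t \<subseteq> set_tree t"
  using redges_sub rootset_sub by (auto simp: Rb_def)

lemma keyB: "distinct (inorder t) \<Longrightarrow> Pset b (swp (Rb b t) t) = Rb b t"
proof (induction t arbitrary: b)
  case Leaf then show ?case by (simp add: Pset_def Rb_def)
next
  case (Node l a r)
  define S where "S = Rb b (Node l a r)"
  have S: "S = redges l \<union> redges r \<union> rootset r \<union> (if odd b then {a} else {})"
    by (auto simp: S_def Rb_def redges_alt)
  have dl: "distinct (inorder l)" and dr: "distinct (inorder r)" using Node.prems by auto
  have sl: "redges l \<subseteq> set_tree l" and sr: "redges r \<union> rootset r \<subseteq> set_tree r"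
    using redges_sub rootset_sub by auto
  have Sl: "swp S l = swp (redges l) l"
    by (rule swp_cong) (use Node.prems sr S in auto)
  have Sr: "swp S r = swp (redges r \<union> rootset r) r"
    by (rule swp_cong) (use Node.prems sl S in auto)
  have aS: "a \<in> S \<longleftrightarrow> odd b" using Node.prems sl sr S by auto
  have Rl: "Rb c l = redges l" if "even c" for c using that by (simp add: Rb_def)
  have Rr: "Rb c r = redges r \<union> rootset r" if "odd c" for c using that by (simp add: Rb_def)
  have dsw: "distinct (inorder (swp S (Node l a r)))" using distinct_swp[OF Node.prems] .
  show ?case
  proof (cases "odd b")
    case True
    have IHl: "Pset (Suc b) (swp (redges l) l) = redges l"
      using Node.IH(1)[OF dl, of "Suc b"] Rl[of "Suc b"] True by simp
    have IHr: "Pset b (swp (redges r \<union> rootset r) r) = redges r \<union> rootset r"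
      using Node.IH(2)[OF dr, of b] Rr[of b] True by simp
    have e: "swp S (Node l a r) = Node (swp S r) a (swp S l)" using aS True by simp
    have "Pset b (swp S (Node l a r)) = {a} \<union> Pset b (swp S r) \<union> Pset (Suc b) (swp S l)"
      using Pset_Node[of "swp S r" a "swp S l" b] dsw e True by simp
    also have "\<dots> = {a} \<union> (redges r \<union> rootset r) \<union> redges l" unfolding Sl Sr IHl IHr ..
    also have "\<dots> = S" unfolding S using True by auto
    finally show ?thesis unfolding S_def .
  next
    case False
    have IHl: "Pset b (swp (redges l) l) = redges l"
      using Node.IH(1)[OF dl, of b] Rl[of b] False by simp
    have IHr: "Pset (Suc b) (swp (redges r \<union> rootset r) r) = redges r \<union> rootset r"
      using Node.IH(2)[OF dr, of "Suc b"] Rr[of "Suc b"] False by simp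
    have e: "swp S (Node l a r) = Node (swp S l) a (swp S r)" using aS False by simp
    have "Pset b (swp S (Node l a r)) = Pset b (swp S l) \<union> Pset (Suc b) (swp S r)"
      using Pset_Node[of "swp S l" a "swp S r" b] dsw e False by simp
    also have "\<dots> = redges l \<union> (redges r \<union> rootset r)" unfolding Sl Sr IHl IHr ..
    also have "\<dots> = S" unfolding S using False by auto
    finally show ?thesis unfolding S_def .
  qed
qed

theorem theorem7p1:
  fixes n :: nat
  shows "(\<forall>\<pi>. is_perm n \<pi> \<longrightarrow> is_perm n (Psi n \<pi>) \<and> is_perm n (Phi \<pi>)
            \<and> Phi (Psi n \<pi>) = \<pi> \<and> Psi n (Phi \<pi>) = \<pi>)
       \<and> (\<forall>\<pi>. is_perm n \<pi> \<longrightarrow>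
            Odd_set n \<pi> = Redge (Psi n \<pi>) \<and> Redge \<pi> = Odd_set n (Phi \<pi>))"
proof -
  have main: "is_perm n (Psi n \<pi>) \<and> is_perm n (Phi \<pi>)
            \<and> Phi (Psi n \<pi>) = \<pi> \<and> Psi n (Phi \<pi>) = \<pi> \<and>
            Odd_set n \<pi> = Redge (Psi n \<pi>) \<and> Redge \<pi> = Odd_set n (Phi \<pi>)"
    if p: "is_perm n \<pi>" for \<pi>
  proof -
    define t where "t = dtree \<pi>"
    have dp: "distinct \<pi>" and sp: "set \<pi> = {1..n}" using p by (auto simp: is_perm_def)
    have it: "inorder t = \<pi>" and ht: "dheap t" using dtree_props[OF dp] by (auto simp: t_def)
    have dt: "distinct (inorder t)" using it dp by simp
    have st: "set_tree t = {1..n}" using it sp by (metis set_inorder)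
    have O: "Odd_set n \<pi> = Pset 0 t"
      unfolding Odd_set_def Pset_def r_pi_def t_def[symmetric] using st by auto
    have fs: "finite (set_tree t)" by (metis List.finite_set set_inorder)
    have finO: "finite (Pset 0 t)" using finite_subset[OF Pset_sub fs] .
    have R0: "Rb 0 t = redges t" by (simp add: Rb_def)
    have finR: "finite (redges t)" using finite_subset[OF redges_sub fs] .
    have Re: "Redge \<pi> = redges t" by (simp add: Redge_def t_def)
    define u where "u = swp (Pset 0 t) t"
    have hu: "dheap u" and du: "distinct (inorder u)" and su: "set_tree u = {1..n}"
      using dheap_swp[OF ht] distinct_swp[OF dt] st by (auto simp: u_def)
    have Psi_eq: "Psi n \<pi> = inorder u"
      unfolding Psi_def O using phi_prod_tree[OF finO ht dt] it by (simp add: u_def)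
    have dtu: "dtree (Psi n \<pi>) = u" using Psi_eq dtree_inorder[OF hu du] by simp
    have Ru: "redges u = Pset 0 t" using keyA[OF dt, of 0] by (simp add: u_def)
    have finRu: "finite (redges u)" using Ru finO by simp
    have PhiPsi: "Phi (Psi n \<pi>) = \<pi>"
      unfolding Phi_def Redge_def dtu using Psi_eq phi_prod_tree[OF finRu hu du] Ru it
      by (simp add: u_def)
    define v where "v = swp (redges t) t"
    have hv: "dheap v" and dv: "distinct (inorder v)" and sv: "set_tree v = {1..n}"
      using dheap_swp[OF ht] distinct_swp[OF dt] st by (auto simp: v_def)
    have Phi_eq: "Phi \<pi> = inorder v"
      unfolding Phi_def Re using phi_prod_tree[OF finR ht dt] it
      by (simp add: v_def)
    have dtv: "dtree (Phi \<pi>) = v" using Phi_eq dtree_inorder[OF hv dv] by simp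
    have Pv: "Pset 0 v = redges t" using keyB[OF dt, of 0] R0 by (simp add: v_def)
    have Ov: "Odd_set n (Phi \<pi>) = Pset 0 v"
      unfolding Odd_set_def Pset_def r_pi_def dtv using sv by auto
    have finOv: "finite (Odd_set n (Phi \<pi>))" using Ov Pv finR by simp
    have PsiPhi: "Psi n (Phi \<pi>) = \<pi>"
      unfolding Psi_def Ov Pv using Phi_eq phi_prod_tree[OF finR hv dv] it
      by (simp add: v_def)
    have perm1: "is_perm n (Psi n \<pi>)" using Psi_eq du su unfolding is_perm_def by (metis set_inorder)
    have perm2: "is_perm n (Phi \<pi>)" using Phi_eq dv sv unfolding is_perm_def by (metis set_inorder)
    have E1: "Odd_set n \<pi> = Redge (Psi n \<pi>)" unfolding Redge_def dtu Ru O ..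
    have E2: "Redge \<pi> = Odd_set n (Phi \<pi>)" using Re Ov Pv by simp
    show ?thesis using perm1 perm2 PhiPsi PsiPhi E1 E2 by blast
  qed
  show ?thesis using main by blast
qed

end
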